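(* For every integer $t\geq 2$ there exist a connected graph $G$ and a function $g:A\to B$ such that $fix(F_G)-fix(G)=t$.
   Context: A set $S\subseteq V(H)$ is a fixing set of a graph $H$ if the only automorphism of $H$ fixing every vertex of $S$ is the identity; $fix(H)$ is the minimum cardinality of a fixing set of $H$. Functigraph: let $G_1,G_2$ be disjoint copies of a connected graph $G$, with $A=V(G_1)$, $B=V(G_2)$, and let $g:A\to B$ be a function. The functigraph $F_G$ has vertex set $A\cup B$ and edge set $E(G_1)\cup E(G_2)\cup\{ug(u):u\in A\}$. *)

theory Defs
  imports Main
begin

definition simple_graph :: "'a set \<Rightarrow> ('a \<Rightarrow> 'a \<Rightarrow> bool) \<Rightarrow> bool" where
  "simple_graph V E \<longleftrightarrow> finite V \<and> (\<forall>u v. E u v \<longrightarrow> u \<in> V \<and> v \<in> V)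
     \<and> (\<forall>u v. E u v \<longrightarrow> E v u) \<and> (\<forall>u. \<not> E u u)"

definition connected_graph :: "'a set \<Rightarrow> ('a \<Rightarrow> 'a \<Rightarrow> bool) \<Rightarrow> bool" where
  "connected_graph V E \<longleftrightarrow> simple_graph V E \<and> V \<noteq> {} \<and> (\<forall>u\<in>V. \<forall>v\<in>V. E\<^sup>*\<^sup>* u v)"

definition automorphism :: "'a set \<Rightarrow> ('a \<Rightarrow> 'a \<Rightarrow> bool) \<Rightarrow> ('a \<Rightarrow> 'a) \<Rightarrow> bool" where
  "automorphism V E f \<longleftrightarrow> bij_betw f V V \<and> (\<forall>u\<in>V. \<forall>v\<in>V. E u v \<longleftrightarrow> E (f u) (f v))"

definition fixing_set :: "'a set \<Rightarrow> ('a \<Rightarrow> 'a \<Rightarrow> bool) \<Rightarrow> 'a set \<Rightarrow> bool" where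
  "fixing_set V E S \<longleftrightarrow> S \<subseteq> V \<and>
     (\<forall>f. automorphism V E f \<and> (\<forall>s\<in>S. f s = s) \<longrightarrow> (\<forall>v\<in>V. f v = v))"

definition fix_number :: "'a set \<Rightarrow> ('a \<Rightarrow> 'a \<Rightarrow> bool) \<Rightarrow> nat" where
  "fix_number V E = (LEAST n. \<exists>S. fixing_set V E S \<and> card S = n)"

text \<open>Functigraph: G1 = Inl-copy (A), G2 = Inr-copy (B); g : A \<rightarrow> B is given as a
  map g :: 'a \<Rightarrow> 'a on V, the vertex u of A being joined to the copy of g u in B.\<close>
definition functigraph_V :: "'a set \<Rightarrow> ('a + 'a) set" where
  "functigraph_V V = Inl ` V \<union> Inr ` V"

definition functigraph_E :: "'a set \<Rightarrow> ('a \<Rightarrow> 'a \<Rightarrow> bool) \<Rightarrow> ('a \<Rightarrow> 'a)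
    \<Rightarrow> ('a + 'a) \<Rightarrow> ('a + 'a) \<Rightarrow> bool" where
  "functigraph_E V E g x y \<longleftrightarrow>
     (\<exists>u v. x = Inl u \<and> y = Inl v \<and> E u v) \<or>
     (\<exists>u v. x = Inr u \<and> y = Inr v \<and> E u v) \<or>
     (\<exists>u\<in>V. x = Inl u \<and> y = Inr (g u)) \<or>
     (\<exists>u\<in>V. x = Inr (g u) \<and> y = Inl u)"

end

theory Submission
  imports Defs
begin

definition sw :: "'b \<Rightarrow> 'b \<Rightarrow> 'b \<Rightarrow> 'b" where
  "sw a b x = (if x = a then b else if x = b then a else x)"

lemma sw_bij: "a \<in> V \<Longrightarrow> b \<in> V \<Longrightarrow> bij_betw (sw a b) V V"
proof -
  assume h: "a \<in> V" "b \<in> V"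
  have inv: "\<And>x. sw a b (sw a b x) = x" by (simp add: sw_def)
  show ?thesis
    by (rule bij_betw_byWitness[where f'="sw a b"]) (use h inv in \<open>auto simp: sw_def\<close>)
qed

lemma sw_aut:
  assumes "a \<in> V" "b \<in> V" "\<And>w. E a w = E b w" "\<And>w. E w a = E w b"
  shows "automorphism V E (sw a b)"
proof -
  have 1: "\<And>u v. E (sw a b u) v = E u v" using assms(3) by (simp add: sw_def)
  have 2: "\<And>u v. E u (sw a b v) = E u v" using assms(4) by (simp add: sw_def)
  show ?thesis unfolding automorphism_def using sw_bij[OF assms(1,2)] 1 2 by simp
qed

lemma sw_not_fixing:
  assumes "a \<in> V" "b \<in> V" "a \<noteq> b" "\<And>w. E a w = E b w" "\<And>w. E w a = E w b"
    "fixing_set V E S"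
  shows "a \<in> S \<or> b \<in> S"
proof (rule ccontr)
  assume "\<not> (a \<in> S \<or> b \<in> S)"
  then have "\<forall>s\<in>S. sw a b s = s" by (auto simp: sw_def)
  with sw_aut[OF assms(1,2,4,5)] assms(6) have "\<forall>v\<in>V. sw a b v = v"
    unfolding fixing_set_def by blast
  then have "sw a b a = a" using assms(1) by blast
  with assms(3) show False by (simp add: sw_def)
qed

lemma card_miss:
  assumes "finite L" "\<And>a b. a \<in> L \<Longrightarrow> b \<in> L \<Longrightarrow> a \<noteq> b \<Longrightarrow> a \<in> S \<or> b \<in> S"
  shows "card L \<le> card (L \<inter> S) + 1"
proof -
  have "card (L - S) \<le> Suc 0"
    using assms by (subst card_le_Suc0_iff_eq) auto
  moreover have "card L = card (L \<inter> S) + card (L - S)"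
    using assms(1) by (metis Diff_Diff_Int Int_commute card_Diff_subset_Int card_Int_Diff finite_Int)
  ultimately show ?thesis by simp
qed

lemma last_fixed:
  assumes "inj_on f V" "v \<in> V" "f v \<in> V" "\<forall>x\<in>V-{v}. f x = x"
  shows "f v = v"
proof (rule ccontr)
  assume "f v \<noteq> v"
  then have "f (f v) = f v" using assms(3,4) by auto
  then show False using assms(1,2,3) \<open>f v \<noteq> v\<close> by (metis inj_on_def)
qed

lemma fix_eq:
  assumes "fixing_set V E S0" "card S0 = k" "\<And>S. fixing_set V E S \<Longrightarrow> k \<le> card S"
  shows "fix_number V E = k"
  unfolding fix_number_def
  by (rule Least_equality) (use assms in auto)

definition SV :: "nat \<Rightarrow> nat set" where "SV n = {0..n}"
definition SE :: "nat \<Rightarrow> nat \<Rightarrow> nat \<Rightarrow> bool" where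
  "SE n u v = ((u = 0 \<and> 1 \<le> v \<and> v \<le> n) \<or> (v = 0 \<and> 1 \<le> u \<and> u \<le> n))"

lemma star_conn: "n \<ge> 1 \<Longrightarrow> connected_graph (SV n) (SE n)"
proof -
  assume n: "n \<ge> 1"
  have c: "\<And>u. u \<in> SV n \<Longrightarrow> (SE n)\<^sup>*\<^sup>* u 0 \<and> (SE n)\<^sup>*\<^sup>* 0 u"
  proof -
    fix u assume u: "u \<in> SV n"
    show "(SE n)\<^sup>*\<^sup>* u 0 \<and> (SE n)\<^sup>*\<^sup>* 0 u"
    proof (cases "u = 0")
      case False
      then have "SE n u 0" "SE n 0 u" using u by (auto simp: SE_def SV_def)
      then show ?thesis by auto
    qed simp
  qed
  show ?thesis unfolding connected_graph_def simple_graph_def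
    using c n by (auto simp: SV_def SE_def) (meson atLeastAtMost_iff c rtranclp_trans SV_def zero_le)
qed

lemma star_fix: assumes "n \<ge> 2" shows "fix_number (SV n) (SE n) = n - 1"
proof (rule fix_eq[of _ _ "{2..n}"])
  show "fixing_set (SV n) (SE n) {2..n}"
    unfolding fixing_set_def
  proof (intro conjI allI impI)
    show "{2..n} \<subseteq> SV n" by (auto simp: SV_def)
    fix f assume h: "automorphism (SV n) (SE n) f \<and> (\<forall>s\<in>{2..n}. f s = s)"
    then have bij: "bij_betw f (SV n) (SV n)" and adj: "\<forall>u\<in>SV n. \<forall>v\<in>SV n. SE n u v = SE n (f u) (f v)"
      and fx: "\<forall>s\<in>{2..n}. f s = s" by (auto simp: automorphism_def)
    have "SE n 0 2" using assms by (simp add: SE_def)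
    then have "SE n (f 0) (f 2)" using adj assms by (auto simp: SV_def)
    then have f0: "f 0 = 0" using fx assms by (auto simp: SE_def)
    have inj: "inj_on f (SV n)" using bij by (simp add: bij_betw_def)
    have "f 1 \<in> SV n" using bij assms by (auto simp: SV_def bij_betw_def)
    have oth: "\<forall>x\<in>SV n - {1}. f x = x"
    proof
      fix x assume x: "x \<in> SV n - {1}"
      show "f x = x"
      proof (cases "x = 0")
        case False
        then have "x \<in> {2..n}" using x by (auto simp: SV_def)
        then show ?thesis using fx by blast
      qed (use f0 in simp)
    qed
    have f1: "f 1 = 1"
      by (rule last_fixed[OF inj]) (use assms \<open>f 1 \<in> SV n\<close> oth in \<open>auto simp: SV_def\<close>)
    show "\<forall>v\<in>SV n. f v = v"
    proof
      fix v assume "v \<in> SV n"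
      then show "f v = v" using f0 f1 fx by (cases "v = 0 \<or> v = 1") (auto simp: SV_def)
    qed
  qed
  show "card {2..n} = n - 1" by simp
  fix S assume S: "fixing_set (SV n) (SE n) S"
  have "card {1..n} \<le> card ({1..n} \<inter> S) + 1"
  proof (rule card_miss)
    fix a b assume "a \<in> {1..n}" "b \<in> {1..n}" "a \<noteq> b"
    then show "a \<in> S \<or> b \<in> S"
      by (intro sw_not_fixing[OF _ _ _ _ _ S]) (auto simp: SV_def SE_def)
  qed simp
  moreover have "finite S" using S by (auto simp: fixing_set_def SV_def intro: finite_subset)
  then have "card ({1..n} \<inter> S) \<le> card S" by (simp add: card_mono)
  ultimately show "n - 1 \<le> card S" by simp
qed

abbreviation "FV n \<equiv> functigraph_V (SV n)"
abbreviation "FE n \<equiv> functigraph_E (SV n) (SE n) (\<lambda>_. 0)"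

lemma FE_simp: "FE n x y \<longleftrightarrow>
   (\<exists>u v. x = Inl u \<and> y = Inl v \<and> SE n u v) \<or>
   (\<exists>u v. x = Inr u \<and> y = Inr v \<and> SE n u v) \<or>
   (\<exists>u. u \<le> n \<and> x = Inl u \<and> y = Inr 0) \<or>
   (\<exists>u. u \<le> n \<and> x = Inr 0 \<and> y = Inl u)"
  by (auto simp: functigraph_E_def SV_def)

lemma FV_simp: "x \<in> FV n \<longleftrightarrow> (\<exists>u. u \<le> n \<and> (x = Inl u \<or> x = Inr u))"
  by (auto simp: functigraph_V_def SV_def)

lemma func_fix: assumes "n \<ge> 2" shows "fix_number (FV n) (FE n) = 2 * (n - 1)"
proof (rule fix_eq[of _ _ "Inl ` {2..n} \<union> Inr ` {2..n}"])
  show "fixing_set (FV n) (FE n) (Inl ` {2..n} \<union> Inr ` {2..n})"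
    unfolding fixing_set_def
  proof (intro conjI allI impI)
    show "Inl ` {2..n} \<union> Inr ` {2..n} \<subseteq> FV n" by (auto simp: FV_simp)
    fix f assume h: "automorphism (FV n) (FE n) f \<and> (\<forall>s\<in>Inl ` {2..n} \<union> Inr ` {2..n}. f s = s)"
    then have bij: "bij_betw f (FV n) (FV n)" and adj: "\<forall>u\<in>FV n. \<forall>v\<in>FV n. FE n u v = FE n (f u) (f v)"
      and fx: "\<forall>s\<in>Inl ` {2..n} \<union> Inr ` {2..n}. f s = s" by (auto simp: automorphism_def)
    have inj: "inj_on f (FV n)" using bij by (simp add: bij_betw_def)
    have img: "\<And>x. x \<in> FV n \<Longrightarrow> f x \<in> FV n" using bij by (auto simp: bij_betw_def)
    have l2: "f (Inl 2) = Inl 2" and r2: "f (Inr 2) = Inr 2" using fx assms by auto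
    have mem: "Inl 0 \<in> FV n" "Inr 0 \<in> FV n" "Inl 1 \<in> FV n" "Inr 1 \<in> FV n"
      "Inl 2 \<in> FV n" "Inr 2 \<in> FV n" using assms by (auto simp: FV_simp)
    have "FE n (Inr 0) (Inr 2)" using assms by (simp add: FE_simp SE_def)
    then have "FE n (f (Inr 0)) (Inr 2)" using adj mem r2 by metis
    then have r0: "f (Inr 0) = Inr 0" by (auto simp: FE_simp SE_def)
    have "FE n (Inl 0) (Inl 2)" using assms by (simp add: FE_simp SE_def)
    then have "FE n (f (Inl 0)) (Inl 2)" using adj mem l2 by metis
    then have "f (Inl 0) = Inl 0 \<or> f (Inl 0) = Inr 0" by (auto simp: FE_simp SE_def)
    moreover have "f (Inl 0) \<noteq> Inr 0" using inj mem r0 by (metis inj_on_def sum.distinct(1))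
    ultimately have l0: "f (Inl 0) = Inl 0" by blast
    have "FE n (Inl 0) (Inl 1)" using assms by (simp add: FE_simp SE_def)
    then have "FE n (Inl 0) (f (Inl 1))" using adj mem l0 by metis
    then have "f (Inl 1) = Inr 0 \<or> (\<exists>k. 1 \<le> k \<and> k \<le> n \<and> f (Inl 1) = Inl k)"
      by (auto simp: FE_simp SE_def)
    moreover have "f (Inl 1) \<noteq> Inr 0" using inj mem r0 by (metis inj_on_def sum.distinct(1))
    moreover have "\<And>k. 2 \<le> k \<Longrightarrow> k \<le> n \<Longrightarrow> f (Inl 1) \<noteq> Inl k"
    proof
      fix k assume k: "2 \<le> k" "k \<le> n" "f (Inl 1) = Inl k"
      then have "f (Inl k) = Inl k" using fx by auto
      moreover have "Inl k \<in> FV n" using k by (auto simp: FV_simp)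
      ultimately have "Inl (1::nat) = (Inl k :: nat + nat)" using inj mem k(3) by (metis inj_on_def)
      then show False using k by simp
    qed
    ultimately have l1: "f (Inl 1) = Inl 1"
      by (metis One_nat_def Suc_1 Suc_leI le_neq_implies_less)
    have oth: "\<forall>x\<in>FV n - {Inr 1}. f x = x"
    proof
      fix x assume x: "x \<in> FV n - {Inr 1}"
      then obtain u where u: "u \<le> n" "x = Inl u \<or> x = Inr u" by (auto simp: FV_simp)
      show "f x = x"
      proof (cases "u \<ge> 2")
        case True then show ?thesis using u fx by auto
      next
        case False then have "u = 0 \<or> u = 1" by auto
        then show ?thesis using u x l0 l1 r0 by auto
      qed
    qed
    have r1: "f (Inr 1) = Inr 1" by (rule last_fixed[OF inj mem(4) img[OF mem(4)] oth])
    show "\<forall>v\<in>FV n. f v = v" using oth r1 by blast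
  qed
  have "card (Inl ` {2..n} \<union> Inr ` {2..n} :: (nat+nat) set) = card (Inl ` {2..n} :: (nat+nat) set) + card (Inr ` {2..n} :: (nat+nat) set)"
    by (rule card_Un_disjoint) auto
  also have "\<dots> = 2 * (n - 1)" by (simp add: card_image)
  finally show "card (Inl ` {2..n} \<union> Inr ` {2..n} :: (nat+nat) set) = 2 * (n - 1)" .
  fix S assume S: "fixing_set (FV n) (FE n) S"
  have c1: "card (Inl ` {1..n} :: (nat+nat) set) \<le> card (Inl ` {1..n} \<inter> S) + 1"
  proof (rule card_miss)
    fix a b assume "a \<in> (Inl ` {1..n} :: (nat+nat) set)" "b \<in> (Inl ` {1..n} :: (nat+nat) set)" "a \<noteq> b"
    then show "a \<in> S \<or> b \<in> S"
      by (intro sw_not_fixing[OF _ _ _ _ _ S]) (auto simp: FV_simp FE_simp SE_def)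
  qed simp
  have c2: "card (Inr ` {1..n} :: (nat+nat) set) \<le> card (Inr ` {1..n} \<inter> S) + 1"
  proof (rule card_miss)
    fix a b assume "a \<in> (Inr ` {1..n} :: (nat+nat) set)" "b \<in> (Inr ` {1..n} :: (nat+nat) set)" "a \<noteq> b"
    then show "a \<in> S \<or> b \<in> S"
      by (intro sw_not_fixing[OF _ _ _ _ _ S]) (auto simp: FV_simp FE_simp SE_def)
  qed simp
  have fS: "finite S" using S
    by (auto simp: fixing_set_def functigraph_V_def SV_def intro: finite_subset)
  have "card (Inl ` {1..n} \<inter> S) + card (Inr ` {1..n} \<inter> S) = card ((Inl ` {1..n} \<inter> S) \<union> (Inr ` {1..n} \<inter> S))"
    by (rule card_Un_disjoint[symmetric]) (use fS in auto)
  also have "\<dots> \<le> card S" by (rule card_mono[OF fS]) auto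
  finally show "2 * (n - 1) \<le> card S" using c1 c2 by (simp add: card_image)
qed

theorem lemma2p10:
  fixes t :: nat
  assumes "t \<ge> 2"
  shows "\<exists>(V :: nat set) E g. connected_graph V E \<and> g ` V \<subseteq> V \<and>
     int (fix_number (functigraph_V V) (functigraph_E V E g)) - int (fix_number V E) = int t"
proof (intro exI conjI)
  show "connected_graph (SV (t+1)) (SE (t+1))" by (rule star_conn) simp
  show "(\<lambda>_. 0) ` SV (t+1) \<subseteq> SV (t+1)" by (auto simp: SV_def)
  show "int (fix_number (FV (t+1)) (FE (t+1))) - int (fix_number (SV (t+1)) (SE (t+1))) = int t"
    using func_fix[of "t+1"] star_fix[of "t+1"] assms by simp
qed

end
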